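(* Let $b>1$ be an integer and let $\mathcal{A}$ be a minimal complete deterministic automaton over $A_b=\{0,\ldots,b-1\}$ whose initial state bears a self-loop labelled by $0$. Let $\ell$ be the number of states of $\mathcal{A}$ that belong to $0$-circuits. Then $\mathcal{A}$ accepts by value a purely periodic set of integers if and only if the following two conditions hold: (a) there exists a pseudo-morphism $\phi:\mathcal{A}\to\mathcal{A}_{?,\ell}$; (b) for all states $s,s'$ of $\mathcal{A}$, if $\phi(s)=\phi(s')$ then $s$ and $s'$ are ultimately-equivalent.
   Context: For $u=u_\ell\cdots u_0\in A_b^*$, $\mathrm{val}(u)=\sum_i u_i b^i$. An automaton accepts by value a set $X\subseteq\mathbb{N}$ if for every word $u$, $u$ is accepted iff $\mathrm{val}(u)\in X$. A set $P\subseteq\mathbb{N}$ is purely periodic if $P=R+p\mathbb{N}$ for some $p\ge1$ and $R\subseteq\{0,\ldots,p-1\}$. For $s$ a state and $u$ a word, $s\cdot u$ denotes the state reached from $s$ by reading $u$. A $0$-circuit is a circuit of the automaton all of whose transitions are labelled by the digit $0$. For an integer $q\ge1$, $\mathcal{A}_{?,q}$ is the deterministic complete automaton over $A_b$ with state set $\mathbb{Z}/q\mathbb{Z}=\{0,\ldots,q-1\}$, initial state $0$, transitions $n\xrightarrow{a}(nb+a)\bmod q$, and no specified final states. A pseudo-morphism between complete deterministic automata $\mathcal{A}\to\mathcal{M}$ is a map $\phi$ from states of $\mathcal{A}$ to states of $\mathcal{M}$ such that $\phi$ maps the initial state to the initial state and, for every state $s$ and letter $a$, $\phi(s\cdot a)=\phi(s)\cdot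 a$ (final states need not be preserved). Two states $s,s'$ are ultimately-equivalent if there exists $m\ge1$ such that $s\cdot u=s'\cdot u$ for every word $u$ with $|u|\ge m$. *)

theory Defs
  imports Main
begin

text \<open>Words over A_b are lists of digits in {..<b}, written most significant digit first:
  the list [u_l, ..., u_0].\<close>

definition run :: "('s \<Rightarrow> nat \<Rightarrow> 's) \<Rightarrow> 's \<Rightarrow> nat list \<Rightarrow> 's" where
  "run \<delta> s u = foldl \<delta> s u"

definition val :: "nat \<Rightarrow> nat list \<Rightarrow> nat" where
  "val b u = foldl (\<lambda>n a. n * b + a) 0 u"

definition complete_det_aut ::
  "nat \<Rightarrow> 's set \<Rightarrow> 's \<Rightarrow> ('s \<Rightarrow> nat \<Rightarrow> 's) \<Rightarrow> 's set \<Rightarrow> bool" where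
  "complete_det_aut b Q q0 \<delta> F \<longleftrightarrow>
     finite Q \<and> q0 \<in> Q \<and> F \<subseteq> Q \<and> (\<forall>s\<in>Q. \<forall>a<b. \<delta> s a \<in> Q)"

definition minimal_aut ::
  "nat \<Rightarrow> 's set \<Rightarrow> 's \<Rightarrow> ('s \<Rightarrow> nat \<Rightarrow> 's) \<Rightarrow> 's set \<Rightarrow> bool" where
  "minimal_aut b Q q0 \<delta> F \<longleftrightarrow>
     complete_det_aut b Q q0 \<delta> F \<and>
     (\<forall>s\<in>Q. \<exists>u\<in>lists {..<b}. run \<delta> q0 u = s) \<and>
     (\<forall>s\<in>Q. \<forall>s'\<in>Q. s \<noteq> s' \<longrightarrow>
        (\<exists>u\<in>lists {..<b}. (run \<delta> s u \<in> F) \<noteq> (run \<delta> s' u \<in> F)))"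

definition on_zero_circuit :: "('s \<Rightarrow> nat \<Rightarrow> 's) \<Rightarrow> 's \<Rightarrow> bool" where
  "on_zero_circuit \<delta> s \<longleftrightarrow> (\<exists>k\<ge>1. ((\<lambda>t. \<delta> t 0) ^^ k) s = s)"

definition accepts_by_value ::
  "nat \<Rightarrow> 's \<Rightarrow> ('s \<Rightarrow> nat \<Rightarrow> 's) \<Rightarrow> 's set \<Rightarrow> nat set \<Rightarrow> bool" where
  "accepts_by_value b q0 \<delta> F X \<longleftrightarrow>
     (\<forall>u\<in>lists {..<b}. (run \<delta> q0 u \<in> F) \<longleftrightarrow> val b u \<in> X)"

definition purely_periodic :: "nat set \<Rightarrow> bool" where
  "purely_periodic P \<longleftrightarrow>
     (\<exists>p\<ge>1. \<exists>R \<subseteq> {..<p}. P = {r + p * k | r k. r \<in> R})"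

text \<open>Pseudo-morphism into A_{?,q} (states {0..<q}, initial 0, n -a-> (n*b+a) mod q).\<close>
definition pseudo_morphism_to_mod ::
  "nat \<Rightarrow> 's set \<Rightarrow> 's \<Rightarrow> ('s \<Rightarrow> nat \<Rightarrow> 's) \<Rightarrow> nat \<Rightarrow> ('s \<Rightarrow> nat) \<Rightarrow> bool" where
  "pseudo_morphism_to_mod b Q q0 \<delta> q \<phi> \<longleftrightarrow>
     \<phi> q0 = 0 \<and> (\<forall>s\<in>Q. \<phi> s < q) \<and>
     (\<forall>s\<in>Q. \<forall>a<b. \<phi> (\<delta> s a) = (\<phi> s * b + a) mod q)"

definition ult_equiv :: "nat \<Rightarrow> ('s \<Rightarrow> nat \<Rightarrow> 's) \<Rightarrow> 's \<Rightarrow> 's \<Rightarrow> bool" where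
  "ult_equiv b \<delta> s s' \<longleftrightarrow>
     (\<exists>m\<ge>1. \<forall>u\<in>lists {..<b}. length u \<ge> m \<longrightarrow> run \<delta> s u = run \<delta> s' u)"

end

theory Submission
  imports Defs
begin

fun dig :: "nat \<Rightarrow> nat \<Rightarrow> nat \<Rightarrow> nat list" where
  "dig b 0 x = []"
| "dig b (Suc n) x = dig b n (x div b) @ [x mod b]"

lemma length_dig[simp]: "length (dig b n x) = n"
  by (induction n arbitrary: x) auto

lemma dig_lists: "b > 0 \<Longrightarrow> dig b n x \<in> lists {..<b}"
  by (induction n arbitrary: x) auto

lemma val_snoc: "val b (u @ [a]) = val b u * b + a"
  by (simp add: val_def)

lemma val_append: "val b (u @ v) = val b u * b ^ length v + val b v"
proof (induction v rule: rev_induct)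
  case Nil then show ?case by (simp add: val_def)
next
  case (snoc a v)
  have "val b (u @ v @ [a]) = val b (u @ v) * b + a" using val_snoc[of b "u@v" a] by simp
  also have "\<dots> = val b u * b ^ length (v @ [a]) + val b (v @ [a])"
    using snoc by (simp add: val_snoc algebra_simps)
  finally show ?case by simp
qed

lemma val_Nil[simp]: "val b [] = 0" by (simp add: val_def)

lemma val_dig: "val b (dig b n x) = x mod b ^ n"
proof (induction n arbitrary: x)
  case 0 then show ?case by simp
next
  case (Suc n)
  have "val b (dig b (Suc n) x) = (x div b mod b ^ n) * b + x mod b"
    using Suc by (simp add: val_snoc)
  also have "\<dots> = x mod (b * b ^ n)" by (simp add: mod_mult2_eq mult.commute)
  finally show ?case by simp
qed

lemma val_less: "u \<in> lists {..<b} \<Longrightarrow> val b u < b ^ length u"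
proof (induction u rule: rev_induct)
  case Nil then show ?case by simp
next
  case (snoc a u)
  then have a: "a < b" and v: "val b u < b ^ length u" by auto
  then have "val b u + 1 \<le> b ^ length u" by simp
  then have "(val b u + 1) * b \<le> b ^ length u * b" by (rule mult_right_mono) simp
  then show ?case using a by (simp add: val_snoc algebra_simps)
qed

lemma dig_val: "b > 0 \<Longrightarrow> u \<in> lists {..<b} \<Longrightarrow> dig b (length u) (val b u) = u"
proof (induction u rule: rev_induct)
  case Nil then show ?case by simp
next
  case (snoc a u)
  then have a: "a < b" by auto
  have "(val b u * b + a) div b = val b u" using a snoc(2) by simp
  moreover have "(val b u * b + a) mod b = a" using a by simp
  ultimately show ?case using snoc by (simp add: val_snoc)
qed

lemma dig_add: "dig b (m + n) x = dig b m (x div b ^ n) @ dig b n x"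
proof (induction n arbitrary: x)
  case 0 then show ?case by simp
next
  case (Suc n)
  have "dig b (m + Suc n) x = dig b (m + n) (x div b) @ [x mod b]" by simp
  also have "\<dots> = dig b m (x div b div b ^ n) @ dig b n (x div b) @ [x mod b]"
    using Suc by simp
  also have "x div b div b ^ n = x div b ^ Suc n" by (simp add: div_mult2_eq)
  finally show ?case by simp
qed

lemma dig_zero: "dig b m 0 = replicate m 0"
  by (induction m) (auto simp: replicate_append_same)

lemma dig_pad: "x < b ^ n \<Longrightarrow> dig b (m + n) x = replicate m 0 @ dig b n x"
  using dig_add[of b m n x] by (simp add: dig_zero)

lemma run_append: "run \<delta> s (u @ v) = run \<delta> (run \<delta> s u) v"
  by (simp add: run_def)

lemma run_Nil[simp]: "run \<delta> s [] = s" by (simp add: run_def)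

lemma run_Cons: "run \<delta> s (a # u) = run \<delta> (\<delta> s a) u" by (simp add: run_def)

lemma run_zeros: "\<delta> q 0 = q \<Longrightarrow> run \<delta> q (replicate m 0) = q"
  by (induction m) (auto simp: run_Cons)

lemma run_in: "(\<forall>s\<in>Q. \<forall>a<b. \<delta> s a \<in> Q) \<Longrightarrow> s \<in> Q \<Longrightarrow> u \<in> lists {..<b} \<Longrightarrow> run \<delta> s u \<in> Q"
  by (induction u arbitrary: s) (auto simp: run_Cons)

lemma funpow_run: "((\<lambda>t. \<delta> t 0) ^^ k) s = run \<delta> s (replicate k 0)"
proof (induction k)
  case 0 then show ?case by simp
next
  case (Suc k)
  have "replicate (Suc k) (0::nat) = replicate k 0 @ [0]" by (simp add: replicate_append_same)
  then show ?case using Suc by (simp add: run_append run_Cons)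
qed

lemma val_zeros[simp]: "val b (replicate k 0) = 0"
  by (induction k) (auto simp: val_def)


lemma exN:
  assumes b: "b > (1::nat)" and p: "p \<ge> (1::nat)"
  shows "\<exists>N\<ge>1. b^(2*N) mod p = b^N mod p \<and> p < b^N"
proof -
  define f where "f n = b^n mod p" for n
  have "f ` {..p} \<subseteq> {..<p}" using p by (auto simp: f_def)
  then have "card (f ` {..p}) \<le> card {..<p}" by (intro card_mono) auto
  then have "card (f ` {..p}) \<le> p" by simp
  then have "\<not> inj_on f {..p}" by (intro pigeonhole) simp
  then obtain i j where ij: "i \<noteq> j" "f i = f j" unfolding inj_on_def by blast
  obtain i j where ij: "i < j" "f i = f j"
  proof (cases "i < j")
    case True then show ?thesis using that ij by blast
  next
    case False then have "j < i" using ij by simp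
    then show ?thesis using that ij by metis
  qed
  define e where "e = j - i"
  have e: "e > 0" using ij by (simp add: e_def)
  have shift: "b^(i+t) mod p = b^(j+t) mod p" for t
  proof -
    have "b^(i+t) mod p = (b^i mod p) * b^t mod p" by (simp add: power_add mod_mult_left_eq)
    also have "\<dots> = (b^j mod p) * b^t mod p" using ij by (simp add: f_def)
    also have "\<dots> = b^(j+t) mod p" by (simp add: power_add mod_mult_left_eq)
    finally show ?thesis .
  qed
  have per: "n \<ge> i \<Longrightarrow> b^(n + c*e) mod p = b^n mod p" for c n
  proof (induction c)
    case 0 then show ?case by simp
  next
    case (Suc c)
    define t where "t = n + c*e - i"
    have t: "n + c*e = i + t" using Suc.prems by (simp add: t_def)
    have "n + Suc c * e = j + t" using t ij by (simp add: e_def)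
    then have "b^(n + Suc c * e) mod p = b^(i+t) mod p" using shift by simp
    then show ?case using t Suc by simp
  qed
  define N where "N = e * (i + p + 1)"
  have N1: "N \<ge> i + p + 1" using mult_le_mono1[of 1 e "i+p+1"] e by (simp add: N_def)
  have "2*N = N + (i+p+1)*e" by (simp add: N_def)
  then have "b^(2*N) mod p = b^(N + (i+p+1)*e) mod p" by (rule arg_cong[where f="\<lambda>k. b^k mod p"])
  also have "\<dots> = b^N mod p" using per[of N "i+p+1"] N1 by linarith
  finally have "b^(2*N) mod p = b^N mod p" .
  moreover have "p < b^N" using power_gt_expt[of b N] b N1 by linarith
  moreover have "N \<ge> 1" using N1 by simp
  ultimately show ?thesis by blast
qed



lemma pp_lemma:
  assumes "p \<ge> (1::nat)" and "\<And>x. x \<in> X \<longleftrightarrow> x mod p \<in> X"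
  shows "purely_periodic X"
proof -
  define R where "R = {r. r < p \<and> r \<in> X}"
  have "X = {r + p * k | r k. r \<in> R}"
  proof (intro set_eqI iffI)
    fix x assume "x \<in> X"
    then have "x mod p \<in> X" using assms(2)[of x] by blast
    moreover have "x mod p < p" using assms(1) by simp
    ultimately have "x mod p \<in> R" by (simp add: R_def)
    moreover have "x = x mod p + p * (x div p)" by simp
    ultimately show "x \<in> {r + p * k | r k. r \<in> R}" by blast
  next
    fix x assume "x \<in> {r + p * k | r k. r \<in> R}"
    then obtain r k where "x = r + p*k" "r \<in> R" by blast
    then have "r < p" "r \<in> X" by (auto simp: R_def)
    then have "x mod p = r" using \<open>x = r + p*k\<close> by simp
    then show "x \<in> X" using assms(2)[of x] \<open>r \<in> X\<close> by simp
  qed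
  moreover have "R \<subseteq> {..<p}" by (auto simp: R_def)
  ultimately show ?thesis using assms(1) unfolding purely_periodic_def by blast
qed

lemma funpow_fix: "(f ^^ k) s = s \<Longrightarrow> ((f ^^ k) ^^ n) s = s"
  by (induction n) auto

locale aut =
  fixes b :: nat and Q :: "'s set" and q0 :: 's and \<delta> :: "'s \<Rightarrow> nat \<Rightarrow> 's" and F :: "'s set"
  assumes b1: "b > 1" and min: "minimal_aut b Q q0 \<delta> F" and loop: "\<delta> q0 0 = q0"
begin

definition st :: "nat \<Rightarrow> 's" where "st x = run \<delta> q0 (dig b x x)"

lemma trans: "\<forall>s\<in>Q. \<forall>a<b. \<delta> s a \<in> Q" and q0Q: "q0 \<in> Q"
  using min unfolding minimal_aut_def complete_det_aut_def by auto

lemma b0: "b > 0" using b1 by simp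

lemma K: assumes u: "u \<in> lists {..<b}" shows "run \<delta> q0 u = st (val b u)"
proof -
  define n where "n = length u"
  define v where "v = val b u"
  have hv: "v < b^n" using val_less[OF u] by (simp add: v_def n_def)
  have hv2: "v < b^v" using power_gt_expt[of b v] b1 by simp
  have e1: "dig b (v + n) v = replicate v 0 @ u" using dig_pad[OF hv, of v] dig_val[OF b0 u] by (simp add: v_def n_def)
  have e2: "dig b (n + v) v = replicate n 0 @ dig b v v" using dig_pad[OF hv2, of n] .
  have "run \<delta> q0 u = run \<delta> q0 (replicate v 0 @ u)" by (simp add: run_append run_zeros loop)
  also have "\<dots> = run \<delta> q0 (replicate n 0 @ dig b v v)" using e1 e2 by (simp add: add.commute)
  also have "\<dots> = st v" by (simp add: run_append run_zeros loop st_def)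
  finally show ?thesis by (simp add: v_def)
qed

lemma st_Q: "st x \<in> Q"
  unfolding st_def using run_in[OF trans q0Q dig_lists[OF b0]] .

lemma run_st: assumes "v \<in> lists {..<b}" shows "run \<delta> (st x) v = st (x * b ^ length v + val b v)"
proof -
  have xx: "x < b^x" using power_gt_expt[of b x] b1 by simp
  have "run \<delta> (st x) v = run \<delta> q0 (dig b x x @ v)" by (simp add: st_def run_append)
  also have "\<dots> = st (val b (dig b x x @ v))" using K dig_lists[OF b0] assms by simp
  finally show ?thesis using xx by (simp add: val_append val_dig)
qed

lemma st0: "st 0 = q0" by (simp add: st_def)

lemma acc_st: "s \<in> Q \<Longrightarrow> \<exists>x. s = st x"
proof -
  assume "s \<in> Q"
  then obtain u where "u \<in> lists {..<b}" "run \<delta> q0 u = s" using min unfolding minimal_aut_def by blast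
  then show ?thesis using K by blast
qed

lemma delta_st: "a < b \<Longrightarrow> \<delta> (st x) a = st (x * b + a)"
  using run_st[of "[a]" x] by (simp add: run_Cons val_def)

lemma rep_lists: "replicate k 0 \<in> lists {..<b}"
  using b0 by (induction k) auto

lemma zeros_st: "run \<delta> (st x) (replicate k 0) = st (x * b^k)"
  using run_st[OF rep_lists, of x k] by simp

lemma st_dig: "x < b^N \<Longrightarrow> run \<delta> q0 (dig b N x) = st x"
  using K[OF dig_lists[OF b0]] by (simp add: val_dig)


lemma backward:
  assumes pm: "pseudo_morphism_to_mod b Q q0 \<delta> l \<phi>"
    and ue: "\<forall>s\<in>Q. \<forall>s'\<in>Q. \<phi> s = \<phi> s' \<longrightarrow> ult_equiv b \<delta> s s'"
  shows "\<exists>X. accepts_by_value b q0 \<delta> F X \<and> purely_periodic X"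
proof -
  have phi0: "\<phi> q0 = 0" and philt: "\<And>s. s \<in> Q \<Longrightarrow> \<phi> s < l"
    and phid: "\<And>s a. s \<in> Q \<Longrightarrow> a < b \<Longrightarrow> \<phi> (\<delta> s a) = (\<phi> s * b + a) mod l"
    using pm unfolding pseudo_morphism_to_mod_def by auto
  have l1: "l \<ge> 1" using philt[OF q0Q] by simp
  have phirun: "\<phi> (run \<delta> s u) = (\<phi> s * b ^ length u + val b u) mod l"
    if "s \<in> Q" "u \<in> lists {..<b}" for s u
    using that(2)
  proof (induction u rule: rev_induct)
    case Nil then show ?case using philt[OF that(1)] by simp
  next
    case (snoc a u)
    then have a: "a < b" and u: "u \<in> lists {..<b}" by auto
    have rQ: "run \<delta> s u \<in> Q" using run_in[OF trans that(1) u] .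
    have "\<phi> (run \<delta> s (u @ [a])) = (\<phi> (run \<delta> s u) * b + a) mod l"
      using phid[OF rQ a] by (simp add: run_append run_Cons)
    also have "\<dots> = (((\<phi> s * b ^ length u + val b u) mod l) * b + a) mod l" using snoc u by simp
    also have "\<dots> = ((\<phi> s * b ^ length u + val b u) * b + a) mod l"
      by (metis mod_add_left_eq mod_mult_left_eq)
    also have "\<dots> = (\<phi> s * b ^ length (u @ [a]) + val b (u @ [a])) mod l"
      by (simp add: val_snoc algebra_simps)
    finally show ?case .
  qed
  have "\<exists>M. \<forall>s\<in>Q. \<forall>s'\<in>Q. \<phi> s = \<phi> s' \<longrightarrow> (\<forall>u\<in>lists {..<b}. length u \<ge> M \<longrightarrow> run \<delta> s u = run \<delta> s' u)"
  proof -
    define S where "S = {(s,s'). s \<in> Q \<and> s' \<in> Q \<and> \<phi> s = \<phi> s'}"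
    have fQ: "finite Q" using min unfolding minimal_aut_def complete_det_aut_def by auto
    have fS: "finite S" by (rule finite_subset[of _ "Q \<times> Q"]) (auto simp: S_def fQ)
    define mf where "mf = (\<lambda>(s,s'). SOME m. m \<ge> 1 \<and> (\<forall>u\<in>lists {..<b}. length u \<ge> m \<longrightarrow> run \<delta> s u = run \<delta> s' u))"
    define M where "M = Max (mf ` S)"
    show ?thesis
    proof (intro exI ballI impI)
      fix s s' u assume s: "s \<in> Q" "s' \<in> Q" "\<phi> s = \<phi> s'" and u: "u \<in> lists {..<b}" "M \<le> length u"
      have inS: "(s,s') \<in> S" using s by (simp add: S_def)
      have ex: "\<exists>m. m \<ge> 1 \<and> (\<forall>u\<in>lists {..<b}. length u \<ge> m \<longrightarrow> run \<delta> s u = run \<delta> s' u)"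
        using ue s unfolding ult_equiv_def by blast
      have P: "\<forall>u\<in>lists {..<b}. length u \<ge> mf (s,s') \<longrightarrow> run \<delta> s u = run \<delta> s' u"
        using someI_ex[OF ex] unfolding mf_def by simp
      have "mf (s,s') \<le> M" unfolding M_def using fS inS by (intro Max_ge) auto
      then show "run \<delta> s u = run \<delta> s' u" using P u by auto
    qed
  qed
  then obtain M where M: "\<And>s s' u. s \<in> Q \<Longrightarrow> s' \<in> Q \<Longrightarrow> \<phi> s = \<phi> s' \<Longrightarrow> u \<in> lists {..<b} \<Longrightarrow> length u \<ge> M \<Longrightarrow> run \<delta> s u = run \<delta> s' u"
    by blast
  define P where "P = b^M * l"
  have P1: "P \<ge> 1" using l1 b0 by (simp add: P_def)
  have stP: "st x = st y" if xy: "x mod P = y mod P" for x y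
  proof -
    define n where "n = x + y"
    have xl: "x < b^(n + M)" using power_gt_expt[of b "n+M"] b1 by (simp add: n_def)
    have yl: "y < b^(n + M)" using power_gt_expt[of b "n+M"] b1 by (simp add: n_def)
    have bM: "b^M > 0" using b0 by simp
    have xd: "x div b^M < b^n"
      using xl bM by (simp add: div_less_iff_less_mult power_add mult.commute)
    have yd: "y div b^M < b^n"
      using yl bM by (simp add: div_less_iff_less_mult power_add mult.commute)
    have m1: "x mod b^M = y mod b^M"
    proof -
      have "x mod P mod b^M = x mod b^M" by (simp add: P_def mod_mod_cancel)
      moreover have "y mod P mod b^M = y mod b^M" by (simp add: P_def mod_mod_cancel)
      ultimately show ?thesis using xy by simp
    qed
    have m2: "x div b^M mod l = y div b^M mod l"
    proof -
      have "x mod P div b^M = x div b^M mod l" unfolding P_def mod_mult2_eq using bM by simp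
      moreover have "y mod P div b^M = y div b^M mod l" unfolding P_def mod_mult2_eq using bM by simp
      ultimately show ?thesis using xy by simp
    qed
    define s where "s = run \<delta> q0 (dig b n (x div b^M))"
    define s' where "s' = run \<delta> q0 (dig b n (y div b^M))"
    have sQ: "s \<in> Q" "s' \<in> Q" unfolding s_def s'_def using run_in[OF trans q0Q dig_lists[OF b0]] by auto
    have "\<phi> s = x div b^M mod l" unfolding s_def
      using phirun[OF q0Q dig_lists[OF b0]] phi0 xd by (simp add: val_dig)
    moreover have "\<phi> s' = y div b^M mod l" unfolding s'_def
      using phirun[OF q0Q dig_lists[OF b0]] phi0 yd by (simp add: val_dig)
    ultimately have ph: "\<phi> s = \<phi> s'" using m2 by simp
    have dd: "dig b M x = dig b M y"
    proof -
      have "dig b M x = dig b M (val b (dig b M x))" using dig_val[OF b0 dig_lists[OF b0], of M x] by simp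
      also have "\<dots> = dig b M (x mod b^M)" by (simp add: val_dig)
      also have "\<dots> = dig b M (y mod b^M)" using m1 by simp
      also have "\<dots> = dig b M (val b (dig b M y))" by (simp add: val_dig)
      also have "\<dots> = dig b M y" using dig_val[OF b0 dig_lists[OF b0], of M y] by simp
      finally show ?thesis .
    qed
    have "st x = run \<delta> q0 (dig b (n + M) x)" using st_dig[OF xl] by simp
    also have "\<dots> = run \<delta> s (dig b M x)" by (simp add: dig_add s_def run_append)
    also have "\<dots> = run \<delta> s' (dig b M y)" using M[OF sQ ph dig_lists[OF b0]] dd by simp
    also have "\<dots> = run \<delta> q0 (dig b (n + M) y)" by (simp add: dig_add s'_def run_append)
    also have "\<dots> = st y" using st_dig[OF yl] by simp
    finally show ?thesis .
  qed
  define X where "X = {x. st x \<in> F}"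
  have "accepts_by_value b q0 \<delta> F X"
    unfolding accepts_by_value_def X_def using K by simp
  moreover have "purely_periodic X"
  proof (rule pp_lemma[OF P1])
    fix x show "x \<in> X \<longleftrightarrow> x mod P \<in> X" using stP[of x "x mod P"] by (simp add: X_def)
  qed
  ultimately show ?thesis by blast
qed


lemma forward:
  assumes pp: "purely_periodic X" and acc: "accepts_by_value b q0 \<delta> F X"
  shows "\<exists>\<phi>. pseudo_morphism_to_mod b Q q0 \<delta> (card {s \<in> Q. on_zero_circuit \<delta> s}) \<phi> \<and>
               (\<forall>s\<in>Q. \<forall>s'\<in>Q. \<phi> s = \<phi> s' \<longrightarrow> ult_equiv b \<delta> s s')"
proof -
  obtain p R where p: "p \<ge> 1" "R \<subseteq> {..<p}" "X = {r + p*k | r k. r \<in> R}"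
    using pp unfolding purely_periodic_def by blast
  have XR: "y \<in> X \<longleftrightarrow> y mod p \<in> R" for y
  proof
    assume "y \<in> X" then obtain r k where rk: "y = r + p*k" "r \<in> R" using p(3) by blast
    moreover have "r < p" using p(2) rk(2) by auto
    ultimately show "y mod p \<in> R" by simp
  next
    assume "y mod p \<in> R"
    moreover have "y = y mod p + p * (y div p)" by simp
    ultimately show "y \<in> X" using p(3) by blast
  qed
  have Xper: "x \<in> X \<longleftrightarrow> x mod p \<in> X" for x using XR[of x] XR[of "x mod p"] by simp
  have stF: "st x \<in> F \<longleftrightarrow> x \<in> X" for x
  proof -
    have xx: "x < b^x" using power_gt_expt[of b x] b1 by simp
    show ?thesis using acc dig_lists[OF b0, of x x] xx unfolding accepts_by_value_def
      by (simp add: st_def val_dig)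
  qed
  have P1: "st x = st y" if e: "x mod p = y mod p" for x y
  proof (rule ccontr)
    assume ne: "st x \<noteq> st y"
    then obtain u where u: "u \<in> lists {..<b}" "(run \<delta> (st x) u \<in> F) \<noteq> (run \<delta> (st y) u \<in> F)"
      using min st_Q unfolding minimal_aut_def by blast
    have em: "(x*b^length u + val b u) mod p = (y*b^length u + val b u) mod p"
    proof -
      have "x*b^length u mod p = y*b^length u mod p" by (metis e mod_mult_left_eq)
      then show ?thesis by (metis mod_add_left_eq)
    qed
    have "run \<delta> (st x) u \<in> F \<longleftrightarrow> (x*b^length u + val b u) mod p \<in> X"
      using run_st[OF u(1)] stF Xper by simp
    moreover have "run \<delta> (st y) u \<in> F \<longleftrightarrow> (y*b^length u + val b u) mod p \<in> X"
      using run_st[OF u(1)] stF Xper by simp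
    ultimately show False using u(2) em by simp
  qed
  obtain N where N: "N \<ge> 1" "b^(2*N) mod p = b^N mod p" "p < b^N" using exN[OF b1 p(1)] by blast
  have powN: "b^n mod p = b^(n+N) mod p" if "n \<ge> N" for n
  proof -
    have "b^n = b^(n-N) * b^N" using that by (simp flip: power_add)
    moreover have "b^(n+N) = b^(n-N) * b^(2*N)"
    proof -
      have "n + N = (n - N) + 2*N" using that by simp
      then show ?thesis by (metis power_add)
    qed
    ultimately show ?thesis using N(2) by (metis mod_mult_right_eq)
  qed
  define g where "g x = st (x*b^N)" for x
  have G1: "g x = g y" if "x mod p = y mod p" for x y
    unfolding g_def using that by (intro P1) (metis mod_mult_left_eq)
  have gg: "g x = st (x*b^N*b^N)" for x
  proof -
    have "x*b^N*b^N = x * b^(2*N)" by (simp add: mult_2 power_add)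
    then have "(x*b^N*b^N) mod p = (x*b^N) mod p" using N(2) by (metis mod_mult_right_eq)
    then show ?thesis unfolding g_def by (intro P1) simp
  qed
  have key: "g (x+w) = run \<delta> (g x) (dig b N (w*b^N mod p))" for x w
  proof -
    define c where "c = w*b^N mod p"
    have "c < p" using p(1) by (simp add: c_def)
    then have c: "c < b^N" using N(3) by linarith
    have "run \<delta> (g x) (dig b N c) = st (x*b^N*b^N + c)"
      unfolding g_def using run_st[OF dig_lists[OF b0, of N c], of "x*b^N"] c by (simp add: val_dig)
    also have "\<dots> = st ((x+w)*b^N)"
    proof (rule P1)
      have "(x*b^N*b^N + c) mod p = ((x*b^N*b^N) mod p + c) mod p" by (simp add: mod_add_left_eq)
      also have "(x*b^N*b^N) mod p = (x*b^N) mod p"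
      proof -
        have "x*b^N*b^N = x * b^(2*N)" by (simp add: mult_2 power_add)
        then show ?thesis using N(2) by (metis mod_mult_right_eq)
      qed
      also have "((x*b^N) mod p + c) mod p = (x*b^N + w*b^N) mod p"
        unfolding c_def by (metis mod_add_left_eq mod_add_right_eq)
      finally show "(x*b^N*b^N + c) mod p = ((x+w)*b^N) mod p" by (simp add: algebra_simps)
    qed
    finally show ?thesis unfolding g_def c_def by simp
  qed
  have G2: "g (x+w) = g (y+w)" if "g x = g y" for x y w
    using key[of x w] key[of y w] that by simp
  define H where "H = {t. \<forall>x. g x = g (x+t)}"
  have pH: "p \<in> H" unfolding H_def by (auto intro: G1)
  have Hadd: "a + c \<in> H" if "a \<in> H" "c \<in> H" for a c
    unfolding H_def
  proof (intro CollectI allI)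
    fix x
    have "g x = g (x + a)" using that(1) by (simp add: H_def)
    also have "\<dots> = g (x + a + c)" using that(2) by (simp add: H_def)
    finally show "g x = g (x + (a + c))" by (simp add: add.assoc)
  qed
  have G3: "y - x \<in> H" if "g x = g y" "x \<le> y" for x y
    unfolding H_def
  proof (intro CollectI allI)
    fix x0
    have "g x0 = g (x0 + p*x)" by (rule G1) simp
    also have "x0 + p*x = x + (x0 + p*x - x)"
    proof -
      have "x \<le> p*x" using mult_le_mono1[of 1 p x] p(1) by simp
      then show ?thesis by arith
    qed
    also have "g (x + (x0 + p*x - x)) = g (y + (x0 + p*x - x))" by (rule G2) (rule that(1))
    also have "y + (x0 + p*x - x) = (x0 + (y - x)) + p*x"
    proof -
      have "x \<le> p*x" using mult_le_mono1[of 1 p x] p(1) by simp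
      then show ?thesis using that(2) by arith
    qed
    also have "g ((x0 + (y - x)) + p*x) = g (x0 + (y - x))" by (rule G1) simp
    finally show "g x0 = g (x0 + (y - x))" .
  qed
  define L where "L = (LEAST t. 0 < t \<and> t \<in> H)"
  have Lp: "0 < L \<and> L \<in> H" unfolding L_def by (rule LeastI[of _ p]) (use p(1) pH in auto)
  have Lmin: "L \<le> t" if "0 < t" "t \<in> H" for t unfolding L_def by (rule Least_le) (use that in auto)
  have Lmult: "c*L \<in> H" for c
  proof (induction c)
    case 0 then show ?case by (simp add: H_def)
  next
    case (Suc c) then show ?case using Hadd[OF _ Suc] Lp by (simp add: add.commute)
  qed
  have gmod: "g x = g (x mod L)" for x
  proof -
    have "g (x mod L) = g (x mod L + (x div L)*L)" using Lmult[of "x div L"] unfolding H_def by blast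
    then show ?thesis by simp
  qed
  have gchar: "g x = g y \<longleftrightarrow> x mod L = y mod L" for x y
  proof
    assume "x mod L = y mod L" then show "g x = g y" using gmod[of x] gmod[of y] by simp
  next
    assume e: "g x = g y"
    have sym: "a = c" if "g a = g c" "a < L" "c < L" "a \<le> c" for a c
    proof (rule ccontr)
      assume "a \<noteq> c"
      then have "0 < c - a" using that by simp
      moreover have "c - a \<in> H" using G3 that by simp
      ultimately have "L \<le> c - a" by (rule Lmin)
      then show False using that by simp
    qed
    have e2: "g (x mod L) = g (y mod L)" using e gmod[of x] gmod[of y] by simp
    have "x mod L < L" "y mod L < L" using Lp by auto
    then show "x mod L = y mod L"
      using sym[OF e2] sym[OF e2[symmetric]] by linarith
  qed
  have W: "x mod L = y mod L" if "st x = st y" for x y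
  proof -
    have "g x = g y" using zeros_st[of x N] zeros_st[of y N] that by (simp add: g_def)
    then show ?thesis using gchar by simp
  qed
  define \<phi> where "\<phi> s = (SOME x. st x = s) mod L" for s
  have \<phi>st: "\<phi> (st x) = x mod L" for x
  proof -
    have "st (SOME y. st y = st x) = st x" by (rule someI_ex) blast
    then show ?thesis unfolding \<phi>_def using W by blast
  qed
  define Z where "Z = {s \<in> Q. on_zero_circuit \<delta> s}"
  have ZL: "Z = g ` {..<L}"
  proof (intro set_eqI iffI)
    fix s assume "s \<in> Z"
    then have sQ: "s \<in> Q" and "on_zero_circuit \<delta> s" by (auto simp: Z_def)
    then obtain k where k: "k \<ge> 1" "((\<lambda>t. \<delta> t 0) ^^ k) s = s" unfolding on_zero_circuit_def by blast
    obtain x where x: "s = st x" using acc_st[OF sQ] by blast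
    have "((\<lambda>t. \<delta> t 0) ^^ (k*N)) s = s" using funpow_fix[OF k(2), of N] by (simp add: funpow_mult)
    then have "s = st (x * b^(k*N))" using x by (simp add: funpow_run zeros_st)
    also have "x * b^(k*N) = (x * b^((k-1)*N)) * b^N"
    proof -
      have "k*N = (k-1)*N + N" using k(1) by (cases k) auto
      then show ?thesis by (simp add: power_add)
    qed
    finally have "s = g (x * b^((k-1)*N))" by (simp add: g_def)
    then have "s = g ((x * b^((k-1)*N)) mod L)" using gmod by simp
    moreover have "(x * b^((k-1)*N)) mod L < L" using Lp by simp
    ultimately show "s \<in> g ` {..<L}" by blast
  next
    fix s assume "s \<in> g ` {..<L}"
    then obtain x where x: "s = g x" by blast
    have "((\<lambda>t. \<delta> t 0) ^^ N) s = st (x*b^N*b^N)" using x by (simp add: funpow_run zeros_st g_def)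
    also have "\<dots> = s" using gg x by simp
    finally have "on_zero_circuit \<delta> s" using N(1) unfolding on_zero_circuit_def by blast
    moreover have "s \<in> Q" using x st_Q by (simp add: g_def)
    ultimately show "s \<in> Z" by (simp add: Z_def)
  qed
  have injg: "inj_on g {..<L}" unfolding inj_on_def using gchar by simp
  have cardZ: "card Z = L" using card_image[OF injg] ZL by simp
  have pm: "pseudo_morphism_to_mod b Q q0 \<delta> L \<phi>"
    unfolding pseudo_morphism_to_mod_def
  proof (intro conjI ballI allI impI)
    show "\<phi> q0 = 0" using \<phi>st[of 0] st0 by simp
  next
    fix s assume "s \<in> Q"
    then obtain x where "s = st x" using acc_st by blast
    then show "\<phi> s < L" using \<phi>st Lp by simp
  next
    fix s a assume "s \<in> Q" "a < b"
    then obtain x where x: "s = st x" using acc_st by blast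
    have "\<phi> (\<delta> s a) = (x*b+a) mod L" using x delta_st[OF \<open>a < b\<close>] \<phi>st by simp
    also have "\<dots> = ((x mod L)*b + a) mod L" by (metis mod_add_left_eq mod_mult_left_eq)
    finally show "\<phi> (\<delta> s a) = (\<phi> s * b + a) mod L" using x \<phi>st by simp
  qed
  have ue: "ult_equiv b \<delta> s s'" if ueA: "s \<in> Q" "s' \<in> Q" "\<phi> s = \<phi> s'" for s s'
  proof -
    obtain x where x: "s = st x" using acc_st[OF ueA(1)] by blast
    obtain y where y: "s' = st y" using acc_st[OF ueA(2)] by blast
    have xy: "s = st x" "s' = st y" using x y by auto
    have "x mod L = y mod L" using ueA(3) \<phi>st[of x] \<phi>st[of y] x y by simp
    then have gxy: "g x = g y" using gchar by blast
    have runeq: "run \<delta> (st z) u = run \<delta> (g z) u" if "u \<in> lists {..<b}" "length u \<ge> N" for z u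
    proof -
      have "run \<delta> (st z) u = st (z * b ^ length u + val b u)" using run_st[OF that(1)] .
      also have "\<dots> = st (z*b^N * b ^ length u + val b u)"
      proof (rule P1)
        have "z * b ^ length u mod p = z * (b ^ length u mod p) mod p"
          by (simp add: mod_mult_right_eq)
        also have "\<dots> = z * (b^(length u + N) mod p) mod p" using powN[OF that(2)] by simp
        also have "\<dots> = z * b^(length u + N) mod p" by (simp add: mod_mult_right_eq)
        also have "z * b^(length u + N) = z*b^N * b ^ length u"
          by (simp add: power_add)
        finally have "z * b ^ length u mod p = z*b^N * b ^ length u mod p" .
        then show "(z * b ^ length u + val b u) mod p = (z*b^N * b ^ length u + val b u) mod p"
          by (metis mod_add_left_eq)
      qed
      also have "\<dots> = run \<delta> (g z) u" using run_st[OF that(1)] by (simp add: g_def)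
      finally show ?thesis .
    qed
    show ?thesis unfolding ult_equiv_def
    proof (intro exI conjI ballI impI)
      fix u assume "u \<in> lists {..<b}" "N \<le> length u"
      then show "run \<delta> s u = run \<delta> s' u" using runeq[of u x] runeq[of u y] gxy xy by simp
    qed (rule N(1))
  qed
  have pm': "pseudo_morphism_to_mod b Q q0 \<delta> (card {s \<in> Q. on_zero_circuit \<delta> s}) \<phi>"
    using pm cardZ by (simp add: Z_def)
  show ?thesis
    by (rule exI[of _ \<phi>]) (use pm' ue in blast)
qed

end
theorem theorem24:
  fixes b :: nat and Q :: "'s set" and q0 :: 's and \<delta> :: "'s \<Rightarrow> nat \<Rightarrow> 's" and F :: "'s set"
  assumes "b > 1"
    and "minimal_aut b Q q0 \<delta> F"
    and "\<delta> q0 0 = q0"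
  defines "l \<equiv> card {s \<in> Q. on_zero_circuit \<delta> s}"
  shows "(\<exists>X. accepts_by_value b q0 \<delta> F X \<and> purely_periodic X) \<longleftrightarrow>
         (\<exists>\<phi>. pseudo_morphism_to_mod b Q q0 \<delta> l \<phi> \<and>
               (\<forall>s\<in>Q. \<forall>s'\<in>Q. \<phi> s = \<phi> s' \<longrightarrow> ult_equiv b \<delta> s s'))"
proof -
  interpret A: aut b Q q0 \<delta> F using assms(1-3) by unfold_locales
  show ?thesis unfolding l_def
  proof
    assume "\<exists>X. accepts_by_value b q0 \<delta> F X \<and> purely_periodic X"
    then obtain X where X: "accepts_by_value b q0 \<delta> F X" "purely_periodic X" by blast
    show "\<exists>\<phi>. pseudo_morphism_to_mod b Q q0 \<delta> (card {s \<in> Q. on_zero_circuit \<delta> s}) \<phi> \<and>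
               (\<forall>s\<in>Q. \<forall>s'\<in>Q. \<phi> s = \<phi> s' \<longrightarrow> ult_equiv b \<delta> s s')"
      by (rule A.forward[OF X(2) X(1)])
  next
    assume "\<exists>\<phi>. pseudo_morphism_to_mod b Q q0 \<delta> (card {s \<in> Q. on_zero_circuit \<delta> s}) \<phi> \<and>
               (\<forall>s\<in>Q. \<forall>s'\<in>Q. \<phi> s = \<phi> s' \<longrightarrow> ult_equiv b \<delta> s s')"
    then obtain \<phi> where P: "pseudo_morphism_to_mod b Q q0 \<delta> (card {s \<in> Q. on_zero_circuit \<delta> s}) \<phi>"
      "\<forall>s\<in>Q. \<forall>s'\<in>Q. \<phi> s = \<phi> s' \<longrightarrow> ult_equiv b \<delta> s s'" by blast
    show "\<exists>X. accepts_by_value b q0 \<delta> F X \<and> purely_periodic X"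
      by (rule A.backward[OF P])
  qed
qed

end
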